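(* Let $a,w$ satisfy Assumption (A), $n\ge1$, $k>0$, $q\in[0,1)$, $l\ge0$, $S_H>0$, $\beta_{H\leftarrow M},\beta_{M\leftarrow H},\rho,\gamma,\mu>0$, and assume $\hat R_e\,h(p(0),q)>1$. Let $$\eta:=\frac{\hat R_e-(1+l)}{\hat R_e-1}\cdot\frac{1}{1-q},\qquad r(x):=a(x)-\eta\big(a(x)+w(x)\big).$$ Then system (O) has an equilibrium with $I_H^*>0$ if and only if there exists $x\in(0,+\infty)$ with $r(x)=0$ and $$1+l<\hat R_e<1+\frac{l}{q}$$ (the upper bound being void when $q=0$). If such an equilibrium exists, it is unique and given by $$I_H^*=p^{-1}(\eta),\qquad I_M^*=\frac{\beta_{M\leftarrow H}}{\mu}h(p(I_H^* ),q)I_H^*,\qquad Z_i^*=J^*=I_H^*\ (i=1,\dots,n).$$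
   Context: Assumption (A): $a,w:[0,\infty)\to(0,\infty)$ are continuously differentiable with $a'(x)>0$ and $w'(x)\le0$ for all $x\ge0$. Let $c(p,q):=1-p(1-q)$, $p(x):=a(x)/(a(x)+w(x))$ (strictly increasing, so $p^{-1}$ exists on its range), $h(p,q):=c(p,q)/(c(p,q)+l)$, and $\hat R_e:=\sqrt{\frac{\beta_{H\leftarrow M}\beta_{M\leftarrow H}}{\gamma\mu}\rho S_H}$. System (O) is the ODE system, with $S_H>0$ a fixed parameter, $$\dot I_H=\beta_{H\leftarrow M}\rho I_M h(p(J),q)S_H-\gamma I_H,\qquad \dot I_M=\beta_{M\leftarrow H}h(p(J),q)I_H-\mu I_M,$$ $$\dot Z_1=kI_H-kZ_1,\qquad \dot Z_i=kZ_{i-1}-kZ_i\ (i=2,\dots,n),\qquad J:=Z_n$$ (for $n=1$: $\dot J=kI_H-kJ$), on the nonnegative orthant. *)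

theory Defs
  imports "HOL-Analysis.Analysis"
begin

definition assumptionA :: "(real \<Rightarrow> real) \<Rightarrow> (real \<Rightarrow> real) \<Rightarrow> bool" where
  "assumptionA a w \<longleftrightarrow>
     (\<forall>x\<ge>0. a x > 0 \<and> w x > 0) \<and>
     (\<exists>a' w'. (\<forall>x\<ge>0. (a has_real_derivative a' x) (at x within {0..}) \<and>
                       (w has_real_derivative w' x) (at x within {0..}) \<and>
                       a' x > 0 \<and> w' x \<le> 0) \<and>
              continuous_on {0..} a' \<and> continuous_on {0..} w')"

definition cfun :: "real \<Rightarrow> real \<Rightarrow> real" where
  "cfun p q = 1 - p * (1 - q)"

definition pfun :: "(real \<Rightarrow> real) \<Rightarrow> (real \<Rightarrow> real) \<Rightarrow> real \<Rightarrow> real" where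
  "pfun a w x = a x / (a x + w x)"

definition hfun :: "real \<Rightarrow> real \<Rightarrow> real \<Rightarrow> real" where
  "hfun l p q = cfun p q / (cfun p q + l)"

definition Re_hat :: "real \<Rightarrow> real \<Rightarrow> real \<Rightarrow> real \<Rightarrow> real \<Rightarrow> real \<Rightarrow> real" where
  "Re_hat bHM bMH gamma mu rho SH = sqrt (bHM * bMH / (gamma * mu) * rho * SH)"

text \<open>Equilibrium of system (O) on the nonnegative orthant.  The state is
  (I_H, I_M, Z_1, ..., Z_n), with Z given as a function on indices 1..n; J = Z n.\<close>
definition is_equilibrium_O ::
  "(real \<Rightarrow> real) \<Rightarrow> (real \<Rightarrow> real) \<Rightarrow> nat \<Rightarrow> real \<Rightarrow> real \<Rightarrow> real \<Rightarrow> real \<Rightarrow>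
   real \<Rightarrow> real \<Rightarrow> real \<Rightarrow> real \<Rightarrow> real \<Rightarrow> real \<Rightarrow> real \<Rightarrow> (nat \<Rightarrow> real) \<Rightarrow> bool" where
  "is_equilibrium_O a w n k q l SH bHM bMH rho gamma mu IH IM Z \<longleftrightarrow>
     IH \<ge> 0 \<and> IM \<ge> 0 \<and> (\<forall>i\<in>{1..n}. Z i \<ge> 0) \<and>
     bHM * rho * IM * hfun l (pfun a w (Z n)) q * SH - gamma * IH = 0 \<and>
     bMH * hfun l (pfun a w (Z n)) q * IH - mu * IM = 0 \<and>
     k * IH - k * Z 1 = 0 \<and>
     (\<forall>i\<in>{2..n}. k * Z (i - 1) - k * Z i = 0)"

end

theory Submission
  imports Defs
begin

lemma mvt_half:
  fixes f f' :: "real \<Rightarrow> real"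
  assumes d: "\<And>x. x \<ge> 0 \<Longrightarrow> (f has_real_derivative f' x) (at x within {0..})"
    and xy: "0 \<le> x" "x < y"
  shows "\<exists>z. x < z \<and> z < y \<and> f y - f x = (y - x) * f' z"
proof -
  have cont: "continuous_on {x..y} f"
  proof -
    have "continuous_on {0..} f"
      unfolding continuous_on_eq_continuous_within
      using d by (auto intro: DERIV_continuous)
    then show ?thesis by (rule continuous_on_subset) (use xy in auto)
  qed
  have dat: "(f has_real_derivative f' z) (at z)" if "z > 0" for z
  proof -
    have "at z within {0..} = at z"
      by (rule at_within_interior) (use that in \<open>simp add: interior_real_atLeast\<close>)
    with d[of z] that show ?thesis by simp
  qed
  have "\<And>z. x < z \<Longrightarrow> z < y \<Longrightarrow> f differentiable at z"
    using dat xy real_differentiable_def by (metis le_less_trans)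
  from MVT[OF xy(2) cont this] obtain L z where
    z: "x < z" "z < y" "(f has_real_derivative L) (at z)" "f y - f x = (y - x) * L" by blast
  have "L = f' z" using DERIV_unique[OF z(3) dat] z xy by linarith
  with z show ?thesis by blast
qed

lemma A_props:
  assumes "assumptionA a w"
  shows "\<And>x. x \<ge> 0 \<Longrightarrow> a x > 0 \<and> w x > 0"
    and "\<And>x y. 0 \<le> x \<Longrightarrow> x < y \<Longrightarrow> a x < a y"
    and "\<And>x y. 0 \<le> x \<Longrightarrow> x < y \<Longrightarrow> w y \<le> w x"
proof -
  from assms obtain a' w' where
    pos: "\<forall>x\<ge>0. a x > 0 \<and> w x > 0" and
    dd: "\<forall>x\<ge>0. (a has_real_derivative a' x) (at x within {0..}) \<and>
                       (w has_real_derivative w' x) (at x within {0..}) \<and>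
                       a' x > 0 \<and> w' x \<le> 0"
    unfolding assumptionA_def by blast
  show "\<And>x. x \<ge> 0 \<Longrightarrow> a x > 0 \<and> w x > 0" using pos by blast
  have dA: "\<And>x. 0 \<le> x \<Longrightarrow> (a has_real_derivative a' x) (at x within {0..})" using dd by blast
  have dW: "\<And>x. 0 \<le> x \<Longrightarrow> (w has_real_derivative w' x) (at x within {0..})" using dd by blast
  show "a x < a y" if xy: "0 \<le> x" "x < y" for x y
  proof -
    obtain z where z: "x < z" "z < y" "a y - a x = (y - x) * a' z"
      using mvt_half[of a a' x y, OF dA xy] by blast
    have "z \<ge> 0" using z xy by linarith
    then have "a' z > 0" using dd by blast
    then have "(y - x) * a' z > 0" using xy by simp
    with z show ?thesis by linarith
  qed
  show "w y \<le> w x" if xy: "0 \<le> x" "x < y" for x y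
  proof -
    obtain z where z: "x < z" "z < y" "w y - w x = (y - x) * w' z"
      using mvt_half[of w w' x y, OF dW xy] by blast
    have "z \<ge> 0" using z xy by linarith
    then have "w' z \<le> 0" using dd by blast
    then have "(y - x) * w' z \<le> 0" using xy by (simp add: mult_nonneg_nonpos)
    with z show ?thesis by linarith
  qed
qed

lemma p_range:
  assumes "assumptionA a w" "x \<ge> 0"
  shows "0 < pfun a w x" "pfun a w x < 1"
  using A_props(1)[OF assms] by (auto simp: pfun_def divide_less_eq)

lemma p_strict:
  assumes A: "assumptionA a w" and xy: "0 \<le> x" "x < y"
  shows "pfun a w x < pfun a w y"
proof -
  have ax: "a x > 0" "w x > 0" "a y > 0" "w y > 0" using A_props(1)[OF A] xy by auto
  have 1: "a x < a y" using A_props(2)[OF A xy] .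
  have 2: "w y \<le> w x" using A_props(3)[OF A xy] .
  have "a x * w y < a y * w y" using 1 ax by simp
  also have "\<dots> \<le> a y * w x" using 2 ax by simp
  finally have "a x * w y < a y * w x" .
  then have "a x * (a y + w y) < a y * (a x + w x)" by (simp add: algebra_simps)
  then show ?thesis using ax unfolding pfun_def
    by (simp add: frac_less_eq divide_neg_pos)
qed

lemma p_inj:
  assumes A: "assumptionA a w"
  shows "inj_on (pfun a w) {0..}"
proof (rule inj_onI)
  fix x y assume "x \<in> {0..}" "y \<in> {0..}" "pfun a w x = pfun a w y"
  then show "x = y" using p_strict[OF A, of x y] p_strict[OF A, of y x]
    by (cases x y rule: linorder_cases) auto
qed

lemma h_props:
  assumes "0 < p" "p < 1" "0 \<le> q" "q < 1" "l \<ge> 0"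
  shows "cfun p q > 0" "0 < hfun l p q" "hfun l p q \<le> 1"
proof -
  have "p * (1 - q) \<le> p" using mult_left_mono[of "1-q" 1 p] assms by simp
  then have "p * (1 - q) < 1" using assms by linarith
  then show c: "cfun p q > 0" unfolding cfun_def by simp
  show "0 < hfun l p q" "hfun l p q \<le> 1" unfolding hfun_def using c assms by auto
qed

lemma l205: fixes h bHM bMH rho SH mu IH gamma :: real
  assumes "bHM * rho * (bMH / mu * h * IH) * h * SH = gamma * IH" "IH > 0" "mu > 0"
  shows "(h * h) * (bHM * bMH * rho * SH) = gamma * mu"
proof -
  define X where "X = (h * h) * (bHM * bMH * rho * SH) / mu"
  have "bHM * rho * (bMH / mu * h * IH) * h * SH = X * IH"
    unfolding X_def by (simp add: mult_ac)
  with assms have "X * IH = gamma * IH" by simp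
  with assms(2) have "X = gamma" using mult_right_cancel[of IH X gamma] by simp
  with assms(3) show ?thesis unfolding X_def by (simp add: divide_eq_eq)
qed
lemma l206: fixes h bHM bMH rho SH mu IH gamma :: real
  assumes "(h * h) * (bHM * bMH * rho * SH) = gamma * mu" "gamma > 0" "mu > 0"
  shows "h * h * (bHM * bMH / (gamma * mu) * rho * SH) = 1"
proof -
  have "h * h * (bHM * bMH / (gamma * mu) * rho * SH) = ((h * h) * (bHM * bMH * rho * SH)) / (gamma * mu)"
    by (simp add: mult_ac)
  then show ?thesis using assms by simp
qed
lemma l238: fixes  bHM bMH rho SH mu IH gamma x R :: real
  shows "bHM * rho * (bMH / mu * (1 / R) * x) * (1 / R) * SH = bHM * bMH * rho * SH / mu * x / (R * R)"
  by (simp add: mult_ac)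
lemma l239: fixes  bHM bMH rho SH mu IH gamma x R :: real
  assumes "R * R = bHM * bMH / (gamma * mu) * rho * SH" "gamma > 0" "mu > 0" "bHM > 0" "bMH > 0" "rho > 0" "SH > 0"
  shows "bHM * bMH * rho * SH / mu * x / (R * R) = gamma * x"
proof -
  have "bHM * bMH * rho * SH / mu * x / (R * R) = (bHM * bMH * rho * SH / mu) * x / ((bHM * bMH * rho * SH / mu) / gamma)"
    unfolding assms(1) by (simp add: mult_ac)
  also have "\<dots> = gamma * x" using assms by (simp add: field_simps)
  finally show ?thesis .
qed

lemma l200: fixes bMH h IH mu IM :: real assumes "bMH * h * IH - mu * IM = 0" "mu > 0"
  shows "IM = bMH / mu * h * IH"
proof -
  have "IM = (bMH * h * IH) / mu" using assms by (simp add: eq_divide_eq mult.commute)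
  then show ?thesis by simp
qed
lemma l211: fixes h R :: real assumes "h * R = 1" "R > 0" shows "h = 1 / R"
  using assms by (simp add: eq_divide_eq)
lemma l224: fixes A W e :: real assumes "A / (A + W) = e" "A > 0" "W > 0" shows "A - e * (A + W) = 0"
  using assms(2,3) unfolding assms(1)[symmetric] by simp
lemma l230: fixes A W e :: real assumes "A - e * (A + W) = 0" "A > 0" "W > 0" shows "A / (A + W) = e"
  using assms by (simp add: divide_eq_eq)

theorem mainTheorem11:
  fixes a w :: "real \<Rightarrow> real" and n :: nat
    and k q l SH bHM bMH rho gamma mu :: real
  assumes hA: "assumptionA a w"
    and hn: "n \<ge> 1" and hk: "k > 0" and hq: "0 \<le> q" "q < 1" and hl: "l \<ge> 0"
    and hSH: "SH > 0" and hpar: "bHM > 0" "bMH > 0" "rho > 0" "gamma > 0" "mu > 0"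
    and hR: "Re_hat bHM bMH gamma mu rho SH * hfun l (pfun a w 0) q > 1"
  shows "let R = Re_hat bHM bMH gamma mu rho SH;
             eta = (R - (1 + l)) / (R - 1) * (1 / (1 - q));
             r = (\<lambda>x. a x - eta * (a x + w x))
         in ((\<exists>IH IM Z. is_equilibrium_O a w n k q l SH bHM bMH rho gamma mu IH IM Z \<and> IH > 0)
              \<longleftrightarrow> ((\<exists>x>0. r x = 0) \<and> 1 + l < R \<and> (q = 0 \<or> R < 1 + l / q)))
          \<and> (\<forall>IH IM Z. is_equilibrium_O a w n k q l SH bHM bMH rho gamma mu IH IM Z \<and> IH > 0 \<longrightarrow>
                IH = the_inv_into {0..} (pfun a w) eta \<and>
                IM = bMH / mu * hfun l (pfun a w IH) q * IH \<and>
                (\<forall>i\<in>{1..n}. Z i = IH))"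
proof -
  define R where "R = Re_hat bHM bMH gamma mu rho SH"
  define eta where "eta = (R - (1 + l)) / (R - 1) * (1 / (1 - q))"
  define r where "r = (\<lambda>x. a x - eta * (a x + w x))"
  define K where "K = bHM * bMH / (gamma * mu) * rho * SH"
  have Kpos: "K > 0" unfolding K_def using hpar hSH by simp
  have R2: "R * R = K" "R > 0" unfolding R_def Re_hat_def K_def[symmetric]
    using Kpos by auto
  have h0: "0 < hfun l (pfun a w 0) q" "hfun l (pfun a w 0) q \<le> 1"
    using h_props[OF p_range[OF hA, of 0] hq hl] by auto
  have R1: "R > 1"
  proof (rule ccontr)
    assume "\<not> R > 1"
    then have "R * hfun l (pfun a w 0) q \<le> 1"
      using h0 by (intro mult_le_one) auto
    with hR show False unfolding R_def by simp
  qed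
  have key: "(hfun l p q = 1 / R \<longleftrightarrow> p = eta) \<and> (p = eta \<longrightarrow> l > 0)" if p: "0 < p" "p < 1" for p
  proof -
    have c: "cfun p q > 0" using h_props[OF p hq hl] by simp
    have "hfun l p q = 1 / R \<longleftrightarrow> R * cfun p q = cfun p q + l"
      unfolding hfun_def using c hl R2 by (auto simp: field_simps)
    also have "\<dots> \<longleftrightarrow> cfun p q * (R - 1) = l" by (auto simp: algebra_simps)
    also have "\<dots> \<longleftrightarrow> cfun p q = l / (R - 1)" using R1 by (auto simp: field_simps)
    also have "\<dots> \<longleftrightarrow> p = eta"
    proof -
      have "cfun p q = l / (R - 1) \<longleftrightarrow> p * (1 - q) = (R - 1 - l) / (R - 1)"
        unfolding cfun_def using R1 by (auto simp: field_simps)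
      also have "\<dots> \<longleftrightarrow> p = (R - 1 - l) / (R - 1) / (1 - q)"
        using hq by (simp add: eq_divide_eq mult_ac)
      also have "\<dots> \<longleftrightarrow> p = eta" unfolding eta_def by (simp add: algebra_simps)
      finally show ?thesis .
    qed
    finally have 1: "hfun l p q = 1 / R \<longleftrightarrow> p = eta" .
    have "l > 0" if "p = eta"
    proof (rule ccontr)
      assume "\<not> l > 0"
      then have "l = 0" using hl by simp
      then have "eta = 1 / (1 - q)" unfolding eta_def using R1 by simp
      moreover have "1 / (1 - q) \<ge> 1" using hq by simp
      ultimately show False using that p by simp
    qed
    with 1 show ?thesis by blast
  qed
  have eta_cond: "1 + l < R \<and> (q = 0 \<or> R < 1 + l / q)" if "0 < eta" "eta < 1"
  proof -
    have X: "(R - (1 + l)) / (R - 1) = eta * (1 - q)" unfolding eta_def using hq by simp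
    have "(R - (1 + l)) / (R - 1) > 0" unfolding X using that hq by simp
    then have A1: "1 + l < R" using R1 by (simp add: zero_less_divide_iff)
    have "(R - (1 + l)) / (R - 1) < 1 - q" unfolding X using that hq by simp
    then have "R - (1 + l) < (1 - q) * (R - 1)" using R1 by (simp add: field_simps)
    then have "q * (R - 1) < l" by (simp add: algebra_simps)
    then have "q = 0 \<or> R < 1 + l / q" using hq R1 by (cases "q = 0") (auto simp: field_simps)
    with A1 show ?thesis by blast
  qed
  have eqanal: "(\<forall>i\<in>{1..n}. Z i = IH) \<and> IM = bMH / mu * hfun l (pfun a w IH) q * IH
      \<and> pfun a w IH = eta"
    if E: "is_equilibrium_O a w n k q l SH bHM bMH rho gamma mu IH IM Z" "IH > 0" for IH IM Z
  proof -
    from E(1) have e1: "bHM * rho * IM * hfun l (pfun a w (Z n)) q * SH - gamma * IH = 0"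
      and e2: "bMH * hfun l (pfun a w (Z n)) q * IH - mu * IM = 0"
      and e3: "k * IH - k * Z 1 = 0" and e4: "\<forall>i\<in>{2..n}. k * Z (i - 1) - k * Z i = 0"
      unfolding is_equilibrium_O_def by auto
    have Zall: "\<forall>i\<in>{1..n}. Z i = IH"
    proof
      fix i assume "i \<in> {1..n}"
      then have "1 \<le> i" "i \<le> n" by auto
      then show "Z i = IH"
      proof (induction i rule: dec_induct)
        case base then show ?case using e3 hk by simp
      next
        case (step m)
        have "Suc m \<in> {2..n}" using step by auto
        then have "k * Z (Suc m - 1) - k * Z (Suc m) = 0" using e4 by blast
        then have "k * (Z m - Z (Suc m)) = 0" by (simp add: algebra_simps)
        then show ?case using step hk by simp
      qed
    qed
    then have Zn: "Z n = IH" using hn by auto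
    define h where "h = hfun l (pfun a w IH) q"
    have IMe: "IM = bMH / mu * h * IH" using l200[OF _ hpar(5)] e2 Zn unfolding h_def by simp
    have p: "0 < pfun a w IH" "pfun a w IH < 1" using p_range[OF hA] E(2) by auto
    have hp: "h > 0" using h_props[OF p hq hl] h_def by simp
    have "bHM * rho * (bMH / mu * h * IH) * h * SH = gamma * IH" using e1 Zn IMe h_def by simp
    then have "(h * h) * (bHM * bMH * rho * SH) = gamma * mu"
      using l205 E(2) hpar by blast
    then have "h * h * K = 1" unfolding K_def using l206 hpar by blast
    then have "(h * R) * (h * R) = 1" using R2(1)[symmetric] by (simp add: algebra_simps)
    then have "(h * R - 1) * (h * R + 1) = 0" by (simp add: algebra_simps)
    moreover have "h * R + 1 > 0" using hp R2 by (simp add: add_pos_pos)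
    ultimately have "h * R = 1" by simp
    then have "h = 1 / R" using R2 l211 by blast
    then have "pfun a w IH = eta" using key[OF p] h_def by simp
    with Zall IMe h_def show ?thesis by simp
  qed
  have part1: "(\<exists>IH IM Z. is_equilibrium_O a w n k q l SH bHM bMH rho gamma mu IH IM Z \<and> IH > 0)
              \<longleftrightarrow> ((\<exists>x>0. r x = 0) \<and> 1 + l < R \<and> (q = 0 \<or> R < 1 + l / q))"
  proof
    assume "\<exists>IH IM Z. is_equilibrium_O a w n k q l SH bHM bMH rho gamma mu IH IM Z \<and> IH > 0"
    then obtain IH IM Z where E: "is_equilibrium_O a w n k q l SH bHM bMH rho gamma mu IH IM Z" "IH > 0"
      by blast
    have pe: "pfun a w IH = eta" using eqanal[OF E] by simp
    have p: "0 < pfun a w IH" "pfun a w IH < 1" using p_range[OF hA] E(2) by auto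
    have aw: "a IH > 0" "w IH > 0" using A_props(1)[OF hA] E(2) by auto
    have "r IH = 0" unfolding r_def using l224[OF _ aw] pe unfolding pfun_def by blast
    with E(2) eta_cond p pe show "(\<exists>x>0. r x = 0) \<and> 1 + l < R \<and> (q = 0 \<or> R < 1 + l / q)" by auto
  next
    assume "(\<exists>x>0. r x = 0) \<and> 1 + l < R \<and> (q = 0 \<or> R < 1 + l / q)"
    then obtain x where x: "x > 0" "r x = 0" by blast
    have aw: "a x > 0" "w x > 0" using A_props(1)[OF hA] x by auto
    have pe: "pfun a w x = eta" using l230[OF _ aw] x(2) unfolding r_def pfun_def by blast
    have p: "0 < pfun a w x" "pfun a w x < 1" using p_range[OF hA] x by auto
    have h: "hfun l (pfun a w x) q = 1 / R" using key[OF p] pe by blast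
    define IM where "IM = bMH / mu * (1 / R) * x"
    have IMp: "IM \<ge> 0" unfolding IM_def using hpar R2 x by simp
    have "bHM * rho * IM * (1 / R) * SH = gamma * x"
    proof -
      have "bHM * rho * IM * (1 / R) * SH = bHM * bMH * rho * SH / mu * x / (R * R)"
        unfolding IM_def by (rule l238)
      also have "\<dots> = gamma * x" using l239[OF R2(1)[unfolded K_def] hpar(4) hpar(5) hpar(1) hpar(2) hpar(3) hSH] .
      finally show ?thesis .
    qed
    then have "is_equilibrium_O a w n k q l SH bHM bMH rho gamma mu x IM (\<lambda>_. x)"
    proof -
      have e2: "bMH * (1 / R) * x - mu * IM = 0" unfolding IM_def using hpar by simp
      show ?thesis unfolding is_equilibrium_O_def h
        using \<open>bHM * rho * IM * (1 / R) * SH = gamma * x\<close> e2 x IMp by simp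
    qed
    with x show "\<exists>IH IM Z. is_equilibrium_O a w n k q l SH bHM bMH rho gamma mu IH IM Z \<and> IH > 0"
      by blast
  qed
  have part2: "\<forall>IH IM Z. is_equilibrium_O a w n k q l SH bHM bMH rho gamma mu IH IM Z \<and> IH > 0 \<longrightarrow>
                IH = the_inv_into {0..} (pfun a w) eta \<and>
                IM = bMH / mu * hfun l (pfun a w IH) q * IH \<and>
                (\<forall>i\<in>{1..n}. Z i = IH)"
  proof (intro allI impI)
    fix IH IM Z assume "is_equilibrium_O a w n k q l SH bHM bMH rho gamma mu IH IM Z \<and> IH > 0"
    then have E: "is_equilibrium_O a w n k q l SH bHM bMH rho gamma mu IH IM Z" "IH > 0" by auto
    note X = eqanal[OF E]
    have "the_inv_into {0..} (pfun a w) eta = IH"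
      using the_inv_into_f_f[OF p_inj[OF hA], of IH] X E(2) by simp
    with X show "IH = the_inv_into {0..} (pfun a w) eta \<and>
                IM = bMH / mu * hfun l (pfun a w IH) q * IH \<and>
                (\<forall>i\<in>{1..n}. Z i = IH)" by simp
  qed
  have both: "((\<exists>IH IM Z. is_equilibrium_O a w n k q l SH bHM bMH rho gamma mu IH IM Z \<and> IH > 0)
              \<longleftrightarrow> ((\<exists>x>0. r x = 0) \<and> 1 + l < R \<and> (q = 0 \<or> R < 1 + l / q)))
          \<and> (\<forall>IH IM Z. is_equilibrium_O a w n k q l SH bHM bMH rho gamma mu IH IM Z \<and> IH > 0 \<longrightarrow>
                IH = the_inv_into {0..} (pfun a w) eta \<and>
                IM = bMH / mu * hfun l (pfun a w IH) q * IH \<and>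
                (\<forall>i\<in>{1..n}. Z i = IH))"
    using part1 part2 by (rule conjI)
  from both[unfolded r_def eta_def R_def] show ?thesis unfolding Let_def .
qed

end
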